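(* Let $X$ be a set strongly star Lindelöf space and $Y$ a compact space such that $X\times Y$ is $T_1$. Then $X\times Y$ is set strongly star Lindelöf.
   Context: For a family $\mathcal U$ of subsets of $Z$ and $A\subseteq Z$, $st(A,\mathcal U)=\bigcup\{U\in\mathcal U: U\cap A\neq\emptyset\}$. A space $Z$ is set strongly star Lindelöf if for every nonempty $A\subseteq Z$ and every family $\mathcal U$ of open subsets of $Z$ with $\overline A\subseteq\bigcup\mathcal U$ there is a countable $F\subseteq\overline A$ with $A\subseteq st(F,\mathcal U)$. *)

theory Defs
  imports "HOL-Analysis.Analysis"
begin

definition star_of :: "'a set \<Rightarrow> 'a set set \<Rightarrow> 'a set" where
  "star_of A \<U> = \<Union>{U \<in> \<U>. U \<inter> A \<noteq> {}}"

definition set_strongly_star_lindelof :: "'a topology \<Rightarrow> bool" where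
  "set_strongly_star_lindelof Z \<longleftrightarrow>
     (\<forall>A \<U>. A \<noteq> {} \<and> A \<subseteq> topspace Z \<and> (\<forall>U\<in>\<U>. openin Z U) \<and> Z closure_of A \<subseteq> \<Union>\<U>
        \<longrightarrow> (\<exists>F. countable F \<and> F \<subseteq> Z closure_of A \<and> A \<subseteq> star_of F \<U>))"

end

theory Submission
  imports Defs
begin

lemma ssl_extent:
  assumes ssl: "set_strongly_star_lindelof X" and ST: "S \<subseteq> topspace X"
    and loc: "\<forall>x\<in>topspace X. \<exists>V. openin X V \<and> x \<in> V \<and> S \<inter> V \<subseteq> {x}"
  shows "countable S"
proof (cases "S = {}")
  case True then show ?thesis by simp
next
  case False
  obtain V where V: "\<And>x. x \<in> topspace X \<Longrightarrow> openin X (V x) \<and> x \<in> V x \<and> S \<inter> V x \<subseteq> {x}"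
    using loc by metis
  have cl: "X closure_of S \<subseteq> S"
  proof
    fix x assume x: "x \<in> X closure_of S"
    then have xt: "x \<in> topspace X" unfolding in_closure_of by blast
    with x V[OF xt] obtain y where "y \<in> S" "y \<in> V x" unfolding in_closure_of by blast
    then show "x \<in> S" using V[OF xt] by blast
  qed
  have cov: "X closure_of S \<subseteq> \<Union>(V ` S)"
  proof
    fix x assume "x \<in> X closure_of S"
    then have "x \<in> S" using cl by blast
    moreover have "x \<in> V x" using V \<open>x \<in> S\<close> ST by blast
    ultimately show "x \<in> \<Union>(V ` S)" by blast
  qed
  have op: "\<forall>U\<in>V ` S. openin X U"
  proof
    fix U assume "U \<in> V ` S"
    then obtain x where "x \<in> S" "U = V x" by blast
    then show "openin X U" using V ST by blast
  qed
  obtain F where F: "countable F" "F \<subseteq> X closure_of S" "S \<subseteq> star_of F (V ` S)"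
  proof -
    have key: "S \<noteq> {} \<and> S \<subseteq> topspace X \<and> (\<forall>U\<in>V ` S. openin X U) \<and> X closure_of S \<subseteq> \<Union>(V ` S)"
      using False ST op cov by simp
    show ?thesis using ssl[unfolded set_strongly_star_lindelof_def, rule_format, OF key] that by blast
  qed
  have "S \<subseteq> F"
  proof
    fix s assume s: "s \<in> S"
    then obtain x where x: "x \<in> S" "s \<in> V x" "V x \<inter> F \<noteq> {}"
      using F(3) unfolding star_of_def by blast
    then obtain f where f: "f \<in> F" "f \<in> V x" by blast
    have xt: "x \<in> topspace X" using x ST by blast
    have "f = x" using f F(2) cl V[OF xt] by blast
    moreover have "s = x" using s x V[OF xt] by blast
    ultimately show "s \<in> F" using f by simp
  qed
  then show ?thesis using F(1) countable_subset by blast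
qed

lemma prod_extent:
  assumes ssl: "set_strongly_star_lindelof X" and cY: "compact_space Y"
    and ET: "E \<subseteq> topspace (prod_topology X Y)"
    and loc: "\<forall>p\<in>topspace (prod_topology X Y). \<exists>W. openin (prod_topology X Y) W \<and> p \<in> W \<and> E \<inter> W \<subseteq> {p}"
  shows "countable E"
proof -
  have tube: "\<exists>V T. openin X V \<and> x \<in> V \<and> finite T \<and> E \<inter> (V \<times> topspace Y) \<subseteq> (\<lambda>y. (x,y)) ` T"
    if xt: "x \<in> topspace X" for x
  proof -
    have "\<forall>y\<in>topspace Y. \<exists>W. openin (prod_topology X Y) W \<and> (x,y) \<in> W \<and> E \<inter> W \<subseteq> {(x,y)}"
      using loc xt by simp
    then obtain W where W: "\<And>y. y \<in> topspace Y \<Longrightarrow> openin (prod_topology X Y) (W y) \<and> (x,y) \<in> W y \<and> E \<inter> W y \<subseteq> {(x,y)}"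
      by metis
    have "\<exists>G H. openin X G \<and> openin Y H \<and> x \<in> G \<and> y \<in> H \<and> G \<times> H \<subseteq> W y"
      if "y \<in> topspace Y" for y
      using W[OF that] unfolding openin_prod_topology_alt by blast
    then obtain G H where GH: "\<And>y. y \<in> topspace Y \<Longrightarrow> openin X (G y) \<and> openin Y (H y) \<and> x \<in> G y \<and> y \<in> H y \<and> G y \<times> H y \<subseteq> W y"
      by metis
    have "(\<forall>U\<in>H ` topspace Y. openin Y U) \<and> topspace Y \<subseteq> \<Union>(H ` topspace Y)"
      using GH by blast
    then obtain \<F> where \<F>: "finite \<F>" "\<F> \<subseteq> H ` topspace Y" "topspace Y \<subseteq> \<Union>\<F>"
      using cY unfolding compact_space_alt by meson
    then obtain T where T: "T \<subseteq> topspace Y" "finite T" "\<F> = H ` T"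
      by (meson finite_subset_image)
    define V where "V = (\<Inter>y\<in>T. G y) \<inter> topspace X"
    have "openin X V" unfolding V_def using T GH by (intro openin_INT) auto
    moreover have "x \<in> V" unfolding V_def using T GH xt by auto
    moreover have "E \<inter> (V \<times> topspace Y) \<subseteq> (\<lambda>y. (x,y)) ` T"
    proof
      fix p assume p: "p \<in> E \<inter> (V \<times> topspace Y)"
      then obtain a b where ab: "p = (a,b)" "a \<in> V" "b \<in> topspace Y" by auto
      then obtain y where y: "y \<in> T" "b \<in> H y" using \<F> T by blast
      have "a \<in> G y" using ab y unfolding V_def by blast
      then have "p \<in> W y" using GH[of y] y T ab by blast
      then have "p = (x,y)" using W[of y] y T p by blast
      then show "p \<in> (\<lambda>y. (x,y)) ` T" using y by blast
    qed
    ultimately show ?thesis using T by blast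
  qed
  have Etop: "E \<subseteq> topspace X \<times> topspace Y" using ET by simp
  have cS: "countable (fst ` E)"
  proof (rule ssl_extent[OF ssl])
    show "fst ` E \<subseteq> topspace X" using Etop by auto
    show "\<forall>x\<in>topspace X. \<exists>V. openin X V \<and> x \<in> V \<and> fst ` E \<inter> V \<subseteq> {x}"
    proof
      fix x assume xt: "x \<in> topspace X"
      then obtain V T where VT: "openin X V" "x \<in> V" "finite T" "E \<inter> (V \<times> topspace Y) \<subseteq> (\<lambda>y. (x,y)) ` T"
        using tube by blast
      have "fst ` E \<inter> V \<subseteq> {x}"
      proof
        fix a assume "a \<in> fst ` E \<inter> V"
        then obtain b where "(a,b) \<in> E" "a \<in> V" by force
        then have "(a,b) \<in> E \<inter> (V \<times> topspace Y)" using Etop by auto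
        then show "a \<in> {x}" using VT(4) by auto
      qed
      then show "\<exists>V. openin X V \<and> x \<in> V \<and> fst ` E \<inter> V \<subseteq> {x}" using VT by blast
    qed
  qed
  have fin: "finite (E \<inter> ({x} \<times> topspace Y))" if "x \<in> fst ` E" for x
  proof -
    have xt: "x \<in> topspace X" using that Etop by auto
    then obtain V T where VT: "openin X V" "x \<in> V" "finite T" "E \<inter> (V \<times> topspace Y) \<subseteq> (\<lambda>y. (x,y)) ` T"
      using tube by blast
    have "E \<inter> ({x} \<times> topspace Y) \<subseteq> E \<inter> (V \<times> topspace Y)" using VT(2) by auto
    also have "\<dots> \<subseteq> (\<lambda>y. (x,y)) ` T" using VT(4) .
    finally show ?thesis using VT(3) by (meson finite_imageI finite_subset)
  qed
  have "E \<subseteq> (\<Union>x\<in>fst ` E. E \<inter> ({x} \<times> topspace Y))"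
  proof
    fix p assume p: "p \<in> E"
    obtain a b where ab: "p = (a,b)" by (cases p)
    have "b \<in> topspace Y" using p Etop ab by blast
    have "a \<in> fst ` E" using p ab by force
    moreover have "p \<in> E \<inter> ({a} \<times> topspace Y)" using p ab \<open>b \<in> topspace Y\<close> by simp
    ultimately show "p \<in> (\<Union>x\<in>fst ` E. E \<inter> ({x} \<times> topspace Y))" by (rule UN_I)
  qed
  moreover have "countable (\<Union>x\<in>fst ` E. E \<inter> ({x} \<times> topspace Y))"
    using cS fin by (intro countable_UN) (simp_all add: countable_finite)
  ultimately show ?thesis using countable_subset by blast
qed

theorem proposition3p2:
  fixes X :: "'a topology" and Y :: "'b topology"
  assumes "set_strongly_star_lindelof X"
    and "compact_space Y"
    and "t1_space (prod_topology X Y)"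
  shows "set_strongly_star_lindelof (prod_topology X Y)"
  unfolding set_strongly_star_lindelof_def
proof (intro allI impI)
  let ?Z = "prod_topology X Y"
  fix A \<U>
  assume H: "A \<noteq> {} \<and> A \<subseteq> topspace ?Z \<and> (\<forall>U\<in>\<U>. openin ?Z U) \<and> ?Z closure_of A \<subseteq> \<Union>\<U>"
  define C where "C = ?Z closure_of A"
  have AC: "A \<subseteq> C" unfolding C_def using H closure_of_subset by blast
  have Ccl: "closedin ?Z C" unfolding C_def by simp
  have CU: "C \<subseteq> \<Union>\<U>" using H C_def by blast
  define Sep where "Sep = {D. D \<subseteq> C \<and> (\<forall>d\<in>D. \<forall>d'\<in>D. d \<noteq> d' \<longrightarrow> \<not> (\<exists>U\<in>\<U>. d \<in> U \<and> d' \<in> U))}"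
  have SepE: "\<And>D. D \<in> Sep \<longleftrightarrow> D \<subseteq> C \<and> (\<forall>d\<in>D. \<forall>d'\<in>D. d \<noteq> d' \<longrightarrow> \<not> (\<exists>U\<in>\<U>. d \<in> U \<and> d' \<in> U))"
    unfolding Sep_def by (simp only: mem_Collect_eq)
  have "\<forall>Ch\<in>chains Sep. \<Union>Ch \<in> Sep"
  proof
    fix Ch assume Ch: "Ch \<in> chains Sep"
    have ChS: "Ch \<subseteq> Sep" and chn: "\<forall>A\<in>Ch. \<forall>B\<in>Ch. A \<subseteq> B \<or> B \<subseteq> A"
      using Ch unfolding chains_def chain_subset_def by auto
    have sub: "\<Union>Ch \<subseteq> C"
    proof
      fix z assume "z \<in> \<Union>Ch"
      then obtain D where "D \<in> Ch" "z \<in> D" by blast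
      then have "D \<in> Sep" using ChS by blast
      then have "D \<subseteq> C" using SepE[THEN iffD1] by blast
      then show "z \<in> C" using \<open>z \<in> D\<close> by blast
    qed
    have sep: "\<forall>d\<in>\<Union>Ch. \<forall>d'\<in>\<Union>Ch. d \<noteq> d' \<longrightarrow> \<not> (\<exists>U\<in>\<U>. d \<in> U \<and> d' \<in> U)"
    proof (intro ballI impI)
      fix d d' assume d: "d \<in> \<Union>Ch" and d': "d' \<in> \<Union>Ch" and ne: "d \<noteq> d'"
      then obtain D1 D2 where D12: "D1 \<in> Ch" "D2 \<in> Ch" "d \<in> D1" "d' \<in> D2" by blast
      then have "D1 \<subseteq> D2 \<or> D2 \<subseteq> D1" using chn by blast
      then obtain D where D: "D \<in> Ch" "d \<in> D" "d' \<in> D" using D12 by blast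
      then have "D \<in> Sep" using ChS by blast
      then have "\<forall>d\<in>D. \<forall>d'\<in>D. d \<noteq> d' \<longrightarrow> \<not> (\<exists>U\<in>\<U>. d \<in> U \<and> d' \<in> U)"
        using SepE[THEN iffD1] by blast
      then show "\<not> (\<exists>U\<in>\<U>. d \<in> U \<and> d' \<in> U)" using D ne by blast
    qed
    show "\<Union>Ch \<in> Sep" using SepE[of "\<Union>Ch", THEN iffD2, OF conjI[OF sub sep]] .
  qed
  then have "\<exists>M\<in>Sep. \<forall>X\<in>Sep. M \<subseteq> X \<longrightarrow> X = M" by (rule Zorn_Lemma)
  then obtain D where D: "D \<in> Sep" and maxD0: "\<forall>D'\<in>Sep. D \<subseteq> D' \<longrightarrow> D' = D"
    by blast
  have maxD: "\<And>D'. D' \<in> Sep \<Longrightarrow> D \<subseteq> D' \<Longrightarrow> D' = D" using maxD0 by blast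
  have DC: "D \<subseteq> C" using SepE[THEN iffD1, OF D] by blast
  have Cstar: "C \<subseteq> star_of D \<U>"
  proof
    fix c assume c: "c \<in> C"
    show "c \<in> star_of D \<U>"
    proof (cases "c \<in> D")
      case True
      then obtain U where "U \<in> \<U>" "c \<in> U" using c CU by blast
      then show ?thesis using True unfolding star_of_def by blast
    next
      case False
      then have "insert c D \<noteq> D" by blast
      then have nS: "insert c D \<notin> Sep" using maxD by blast
      have "insert c D \<subseteq> C" using c DC by blast
      then have "\<not> (\<forall>d\<in>insert c D. \<forall>d'\<in>insert c D. d \<noteq> d' \<longrightarrow> \<not> (\<exists>U\<in>\<U>. d \<in> U \<and> d' \<in> U))"
        using nS SepE[of "insert c D"] by simp
      then obtain d d' U where dd: "d \<in> insert c D" "d' \<in> insert c D" "d \<noteq> d'" "U \<in> \<U>" "d \<in> U" "d' \<in> U"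
        by blast
      have Dsep: "\<forall>d\<in>D. \<forall>d'\<in>D. d \<noteq> d' \<longrightarrow> \<not> (\<exists>U\<in>\<U>. d \<in> U \<and> d' \<in> U)"
        using SepE[THEN iffD1, OF D] by blast
      have "\<exists>e\<in>D. e \<in> U \<and> c \<in> U"
      proof (cases "d = c")
        case True
        then have "d' \<in> D" using dd by auto
        then show ?thesis using dd True by blast
      next
        case False
        then have dD: "d \<in> D" using dd by auto
        show ?thesis
        proof (cases "d' = c")
          case True then show ?thesis using dD dd by blast
        next
          case False
          then have "d' \<in> D" using dd by auto
          then show ?thesis using Dsep dD dd by blast
        qed
      qed
      then show ?thesis using dd(4) unfolding star_of_def by blast
    qed
  qed
  have T1: "\<And>p. p \<in> topspace ?Z \<Longrightarrow> closedin ?Z {p}"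
    using assms(3) unfolding t1_space_closedin_singleton by blast
  have "countable D"
  proof (rule prod_extent[OF assms(1) assms(2)])
    show "D \<subseteq> topspace ?Z" using DC closedin_subset[OF Ccl] by blast
    show "\<forall>p\<in>topspace ?Z. \<exists>W. openin ?Z W \<and> p \<in> W \<and> D \<inter> W \<subseteq> {p}"
    proof
      fix p assume pt: "p \<in> topspace ?Z"
      show "\<exists>W. openin ?Z W \<and> p \<in> W \<and> D \<inter> W \<subseteq> {p}"
      proof (cases "p \<in> C")
        case False
        have "openin ?Z (topspace ?Z - C)" using Ccl by (rule openin_diff[OF openin_topspace])
        moreover have "p \<in> topspace ?Z - C" "D \<inter> (topspace ?Z - C) \<subseteq> {p}"
          using False pt DC by auto
        ultimately show ?thesis by blast
      next
        case True
        then obtain U where U: "U \<in> \<U>" "p \<in> U" using CU by blast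
        have Uo: "openin ?Z U" using U H by blast
        have one: "\<And>d d'. d \<in> D \<inter> U \<Longrightarrow> d' \<in> D \<inter> U \<Longrightarrow> d = d'"
          using SepE[THEN iffD1, OF D] U by blast
        show ?thesis
        proof (cases "\<exists>d\<in>D \<inter> U. d \<noteq> p")
          case False
          then show ?thesis using Uo U by blast
        next
          case True
          then obtain d where d: "d \<in> D \<inter> U" "d \<noteq> p" by blast
          have dt: "d \<in> topspace ?Z" using d Uo openin_subset by blast
          have "openin ?Z (U - {d})" using Uo T1[OF dt] by blast
          moreover have "p \<in> U - {d}" using U d by blast
          moreover have "D \<inter> (U - {d}) \<subseteq> {p}" using one d by blast
          ultimately show ?thesis by blast
        qed
      qed
    qed
  qed
  then show "\<exists>F. countable F \<and> F \<subseteq> ?Z closure_of A \<and> A \<subseteq> star_of F \<U>"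
    using DC AC Cstar C_def by blast
qed

end
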